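(* For all integers $m,n\geq 1$, \[p^{od}_{ed}(m,n)-p^{od}_{ed}(m,n-1)=D_o(m,n)-D_e(m,n-1).\]
   Context: $\mathcal{P}^{od}_{ed}$ is the set of integer partitions whose parts are all distinct and such that every even part is smaller than every odd part. Partitions consisting only of odd parts, or only of even parts, are allowed. For integers $m\ge 1$, $n\ge 0$: - $p^{od}_{ed}(m,n)$ is the number of partitions of $n$ in $\mathcal{P}^{od}_{ed}$ with exactly $m$ parts; in particular $p^{od}_{ed}(m,0)=0$. - $D_o(m,n)$ is the number of partitions of $n$ into exactly $m$ distinct odd parts. - $D_e(m,n)$ is the number of partitions of $n$ into exactly $m$ distinct even parts. *)

theory Defs
  imports Main
begin

text \<open>A partition into distinct parts is represented by its (finite) set of parts,
  all positive. The parts sum to n and there are exactly m of them.\<close>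

definition distinct_parts :: "nat \<Rightarrow> nat \<Rightarrow> nat set set" where
  "distinct_parts m n = {S. finite S \<and> 0 \<notin> S \<and> card S = m \<and> \<Sum>S = n}"

definition p_od_ed :: "nat \<Rightarrow> nat \<Rightarrow> nat" where
  "p_od_ed m n = card {S \<in> distinct_parts m n.
      \<forall>a\<in>S. \<forall>b\<in>S. even a \<and> odd b \<longrightarrow> a < b}"

definition D_o :: "nat \<Rightarrow> nat \<Rightarrow> nat" where
  "D_o m n = card {S \<in> distinct_parts m n. \<forall>a\<in>S. odd a}"

definition D_e :: "nat \<Rightarrow> nat \<Rightarrow> nat" where
  "D_e m n = card {S \<in> distinct_parts m n. \<forall>a\<in>S. even a}"

end

theory Submission
  imports Defs
begin

definition okp :: "nat set \<Rightarrow> bool" where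
  "okp S \<longleftrightarrow> (\<forall>a\<in>S. \<forall>b\<in>S. even a \<and> odd b \<longrightarrow> a < b)"

definition up :: "nat set \<Rightarrow> nat set" where
  "up S = (let q = Min {a\<in>S. odd a} in insert (Suc q) (S - {q}))"

definition down :: "nat set \<Rightarrow> nat set" where
  "down T = (let e = Max {a\<in>T. even a} in insert (e - 1) (T - {e}))"

lemma up_props:
  assumes fin: "finite S" and z: "0 \<notin> S" and ok: "okp S" and ex: "\<exists>a\<in>S. odd a"
  shows "finite (up S) \<and> 0 \<notin> up S \<and> card (up S) = card S \<and> \<Sum>(up S) = Suc (\<Sum>S)
     \<and> okp (up S) \<and> (\<exists>a\<in>up S. even a) \<and> down (up S) = S"
proof -
  define q where "q = Min {a\<in>S. odd a}"
  have f1: "finite {a\<in>S. odd a}" using fin by simp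
  have ne: "{a\<in>S. odd a} \<noteq> {}" using ex by auto
  have qin: "q \<in> S" and qodd: "odd q" using Min_in[OF f1 ne] q_def by auto
  have qmin: "\<And>a. a \<in> S \<Longrightarrow> odd a \<Longrightarrow> q \<le> a" using Min_le[OF f1] q_def by auto
  have nin: "Suc q \<notin> S"
  proof
    assume "Suc q \<in> S"
    then have "Suc q < q" using ok qin qodd unfolding okp_def by auto
    then show False by simp
  qed
  have U: "up S = insert (Suc q) (S - {q})" unfolding up_def q_def Let_def by simp
  have finU: "finite (up S)" using U fin by simp
  have z2: "0 \<notin> up S" using U z by auto
  have c: "card (up S) = card S"
    using U fin nin qin by (simp add: card_insert_disjoint card_Diff_singleton)
      (metis One_nat_def Suc_pred card_gt_0_iff empty_iff)
  have s: "\<Sum>(up S) = Suc (\<Sum>S)"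
    using U fin nin qin by (simp add: sum.remove[of S q])
  have okU: "okp (up S)" unfolding okp_def
  proof (intro ballI impI)
    fix a b assume a: "a \<in> up S" and b: "b \<in> up S" and ab: "even a \<and> odd b"
    show "a < b"
    proof (cases "a = Suc q")
      case True
      then have "b \<in> S" "b \<noteq> q" using b ab U by auto
      then have "q \<le> b" using qmin ab by auto
      then have "q < b" using \<open>b \<noteq> q\<close> by simp
      then have "Suc q < b" using qodd ab by presburger
      then show ?thesis using True by simp
    next
      case False
      then have "a \<in> S" using a U by auto
      moreover have "b \<noteq> Suc q" using ab qodd by auto
      then have "b \<in> S" using b U by auto
      ultimately show ?thesis using ok ab unfolding okp_def by auto
    qed
  qed
  have ev: "\<exists>a\<in>up S. even a" using U qodd by auto
  have mx: "Max {a\<in>up S. even a} = Suc q"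
  proof (rule Max_eqI)
    show "finite {a \<in> up S. even a}" using finU by simp
    show "Suc q \<in> {a \<in> up S. even a}" using U qodd by auto
    fix y assume "y \<in> {a \<in> up S. even a}"
    then have "y \<in> up S" "even y" by auto
    show "y \<le> Suc q"
    proof (cases "y = Suc q")
      case False
      then have "y \<in> S" using \<open>y \<in> up S\<close> U by auto
      then have "y < q" using ok qin qodd \<open>even y\<close> unfolding okp_def by auto
      then show ?thesis by simp
    qed simp
  qed
  have "down (up S) = insert q (up S - {Suc q})" unfolding down_def Let_def mx by simp
  also have "\<dots> = S" using U nin qin by auto
  finally have "down (up S) = S" .
  with finU z2 c s okU ev show ?thesis by (intro conjI) assumption+
qed

lemma down_props:
  assumes fin: "finite T" and z: "0 \<notin> T" and ok: "okp T" and ex: "\<exists>a\<in>T. even a"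
  shows "finite (down T) \<and> 0 \<notin> down T \<and> card (down T) = card T \<and> Suc (\<Sum>(down T)) = \<Sum>T
     \<and> okp (down T) \<and> (\<exists>a\<in>down T. odd a) \<and> up (down T) = T"
proof -
  define e where "e = Max {a\<in>T. even a}"
  have f1: "finite {a\<in>T. even a}" using fin by simp
  have ne: "{a\<in>T. even a} \<noteq> {}" using ex by auto
  have ein: "e \<in> T" and eev: "even e" using Max_in[OF f1 ne] e_def by auto
  have emax: "\<And>a. a \<in> T \<Longrightarrow> even a \<Longrightarrow> a \<le> e" using Max_ge[OF f1] e_def by auto
  have "e \<noteq> 0"
  proof
    assume "e = 0" then show False using ein z by simp
  qed
  then have e2: "e \<ge> 2" using eev by presburger
  have nin: "e - 1 \<notin> T"
  proof
    assume "e - 1 \<in> T"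
    moreover have "odd (e - 1)" using eev e2 by simp
    ultimately have "e < e - 1" using ok ein eev unfolding okp_def by auto
    then show False by simp
  qed
  have oddd: "odd (e - 1)" using eev e2 by simp
  have D: "down T = insert (e - 1) (T - {e})" unfolding down_def e_def Let_def by simp
  have finD: "finite (down T)" using D fin by simp
  have z2: "0 \<notin> down T" using D z e2 by auto
  have c: "card (down T) = card T"
    using D fin nin ein by (simp add: card_insert_disjoint card_Diff_singleton)
      (metis One_nat_def Suc_pred card_gt_0_iff empty_iff)
  have s: "Suc (\<Sum>(down T)) = \<Sum>T"
    using D fin nin ein e2 by (simp add: sum.remove[of T e])
  have okD: "okp (down T)" unfolding okp_def
  proof (intro ballI impI)
    fix a b assume a: "a \<in> down T" and b: "b \<in> down T" and ab: "even a \<and> odd b"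
    have aT: "a \<in> T" "a \<noteq> e" using a ab D oddd by auto
    show "a < b"
    proof (cases "b = e - 1")
      case True
      have "a \<le> e" using emax aT ab by auto
      have "a < e" using \<open>a \<le> e\<close> aT(2) by simp
      then have "a < e - 1" using ab eev by presburger
      then show ?thesis using True by simp
    next
      case False
      then have "b \<in> T" using b D by auto
      then show ?thesis using aT ok ab unfolding okp_def by auto
    qed
  qed
  have od: "\<exists>a\<in>down T. odd a" using D oddd by auto
  have mn: "Min {a\<in>down T. odd a} = e - 1"
  proof (rule Min_eqI)
    show "finite {a \<in> down T. odd a}" using finD by simp
    show "e - 1 \<in> {a \<in> down T. odd a}" using D oddd by auto
    fix y assume "y \<in> {a \<in> down T. odd a}"
    then have "y \<in> down T" "odd y" by auto
    show "e - 1 \<le> y"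
    proof (cases "y = e - 1")
      case False
      then have "y \<in> T" using \<open>y \<in> down T\<close> D by auto
      then have "e < y" using ok ein eev \<open>odd y\<close> unfolding okp_def by auto
      then show ?thesis by simp
    qed simp
  qed
  have "up (down T) = insert (Suc (e - 1)) (down T - {e - 1})" unfolding up_def Let_def mn by simp
  also have "\<dots> = T" using D nin ein e2 by auto
  finally have "up (down T) = T" .
  with finD z2 c s okD od show ?thesis by (intro conjI) assumption+
qed

lemma fin_dp: "finite (distinct_parts m n)"
proof (rule finite_subset)
  show "distinct_parts m n \<subseteq> Pow {0..n}"
  proof
    fix S assume "S \<in> distinct_parts m n"
    then have "finite S" "\<Sum>S = n" unfolding distinct_parts_def by auto
    moreover have "x \<le> \<Sum>S" if "x \<in> S" for x
      using sum.remove[OF \<open>finite S\<close> that, of "\<lambda>x. x"] by simp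
    ultimately show "S \<in> Pow {0..n}" by auto
  qed
qed simp

lemma card_split:
  "p_od_ed m n = card {S \<in> distinct_parts m n. okp S \<and> (\<exists>a\<in>S. even a)} + D_o m n"
  "p_od_ed m n = card {S \<in> distinct_parts m n. okp S \<and> (\<exists>a\<in>S. odd a)} + D_e m n"
proof -
  have A: "{S \<in> distinct_parts m n. okp S} =
     {S \<in> distinct_parts m n. okp S \<and> (\<exists>a\<in>S. even a)} \<union> {S \<in> distinct_parts m n. \<forall>a\<in>S. odd a}"
    unfolding okp_def by auto
  have B: "{S \<in> distinct_parts m n. okp S} =
     {S \<in> distinct_parts m n. okp S \<and> (\<exists>a\<in>S. odd a)} \<union> {S \<in> distinct_parts m n. \<forall>a\<in>S. even a}"
    unfolding okp_def by auto
  have p: "p_od_ed m n = card {S \<in> distinct_parts m n. okp S}"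
    unfolding p_od_ed_def okp_def by simp
  show "p_od_ed m n = card {S \<in> distinct_parts m n. okp S \<and> (\<exists>a\<in>S. even a)} + D_o m n"
    unfolding p A D_o_def
    by (rule card_Un_disjoint) (auto intro: finite_subset[OF _ fin_dp])
  show "p_od_ed m n = card {S \<in> distinct_parts m n. okp S \<and> (\<exists>a\<in>S. odd a)} + D_e m n"
    unfolding p B D_e_def
    by (rule card_Un_disjoint) (auto intro: finite_subset[OF _ fin_dp])
qed

lemma bij_part:
  "card {S \<in> distinct_parts m k. okp S \<and> (\<exists>a\<in>S. odd a)}
   = card {S \<in> distinct_parts m (Suc k). okp S \<and> (\<exists>a\<in>S. even a)}"
proof (rule bij_betw_same_card)
  show "bij_betw up {S \<in> distinct_parts m k. okp S \<and> (\<exists>a\<in>S. odd a)}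
     {S \<in> distinct_parts m (Suc k). okp S \<and> (\<exists>a\<in>S. even a)}"
  proof (rule bij_betw_byWitness[where f' = down])
    show "\<forall>a\<in>{S \<in> distinct_parts m k. okp S \<and> (\<exists>a\<in>S. odd a)}. down (up a) = a"
      using up_props unfolding distinct_parts_def by auto
    show "\<forall>a\<in>{S \<in> distinct_parts m (Suc k). okp S \<and> (\<exists>a\<in>S. even a)}. up (down a) = a"
      using down_props unfolding distinct_parts_def by auto
    show "up ` {S \<in> distinct_parts m k. okp S \<and> (\<exists>a\<in>S. odd a)}
        \<subseteq> {S \<in> distinct_parts m (Suc k). okp S \<and> (\<exists>a\<in>S. even a)}"
    proof
      fix T assume "T \<in> up ` {S \<in> distinct_parts m k. okp S \<and> (\<exists>a\<in>S. odd a)}"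
      then obtain S where S: "S \<in> distinct_parts m k" "okp S" "\<exists>a\<in>S. odd a" and T: "T = up S" by auto
      show "T \<in> {S \<in> distinct_parts m (Suc k). okp S \<and> (\<exists>a\<in>S. even a)}"
        using up_props[of S] S T unfolding distinct_parts_def by auto
    qed
    show "down ` {S \<in> distinct_parts m (Suc k). okp S \<and> (\<exists>a\<in>S. even a)}
        \<subseteq> {S \<in> distinct_parts m k. okp S \<and> (\<exists>a\<in>S. odd a)}"
    proof
      fix T assume "T \<in> down ` {S \<in> distinct_parts m (Suc k). okp S \<and> (\<exists>a\<in>S. even a)}"
      then obtain S where S: "S \<in> distinct_parts m (Suc k)" "okp S" "\<exists>a\<in>S. even a" and T: "T = down S" by auto
      show "T \<in> {S \<in> distinct_parts m k. okp S \<and> (\<exists>a\<in>S. odd a)}"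
        using down_props[of S] S T unfolding distinct_parts_def by auto
    qed
  qed
qed

theorem mainTheorem1:
  fixes m n :: nat
  assumes "m \<ge> 1" and "n \<ge> 1"
  shows "int (p_od_ed m n) - int (p_od_ed m (n - 1)) = int (D_o m n) - int (D_e m (n - 1))"
proof -
  obtain k where n: "n = Suc k" using assms(2) by (cases n) auto
  have "p_od_ed m n = card {S \<in> distinct_parts m (Suc k). okp S \<and> (\<exists>a\<in>S. even a)} + D_o m n"
    using card_split(1)[of m n] n by simp
  moreover have "p_od_ed m (n - 1) = card {S \<in> distinct_parts m k. okp S \<and> (\<exists>a\<in>S. odd a)} + D_e m (n - 1)"
    using card_split(2)[of m k] n by simp
  ultimately show ?thesis using bij_part[of m k] by simp
qed

end
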